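(* Let $\nu\in\mathbb{N}$, let $(X,d)$ be a complete $\nu$-generalized metric space, and let $T:X\to X$ be a Ćirić–Matkowski contraction. Then $T$ has a unique fixed point $z$, and for every $x\in X$ the sequence $\{T^nx\}$ converges to $z$ in the strong sense.
   Context: Let $X$ be a nonempty set, $d:X\times X\to[0,\infty)$, and $\nu\in\mathbb{N}$. $(X,d)$ is a $\nu$-generalized metric space if: (1) $d(x,y)=0$ iff $x=y$; (2) $d(x,y)=d(y,x)$ for all $x,y$; (3) $d(x,y)\le d(x,u_1)+d(u_1,u_2)+\dots+d(u_\nu,y)$ for every set $\{x,u_1,\dots,u_\nu,y\}$ of $\nu+2$ pairwise distinct elements of $X$. A sequence $\{x_n\}$ in $X$ is Cauchy if $\lim_{n\to\infty}\sup\{d(x_n,x_{n+1+m}): m\in\mathbb{Z}^+\}=0$ ($\mathbb{Z}^+$ the nonnegative integers). $\{x_n\}$ converges to $x$ if $d(x,x_n)\to0$; it converges to $x$ in the strong sense if it is Cauchy and converges to $x$. $X$ is complete if every Cauchy sequence in $X$ converges. A map $T:X\to X$ is a Ćirić–Matkowski contraction if $d(Tx,Ty)<d(x,y)$ for all $x\ne y$ in $X$, and for every $\epsilon>0$ there exists $\delta>0$ such that for all $x,y\in X$, $d(x,y)<\delta+\epsilon$ implies $d(Tx,Ty)\le\epsilon$. *)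

theory Defs
  imports "HOL-Analysis.Analysis"
begin

text \<open>Condition (3) is stated for every list [x, u_1, ..., u_nu, y] of nu+2 pairwise
  distinct elements of X: d(x,y) is at most the sum of consecutive distances.\<close>
definition nu_gen_metric :: "nat \<Rightarrow> 'a set \<Rightarrow> ('a \<Rightarrow> 'a \<Rightarrow> real) \<Rightarrow> bool" where
  "nu_gen_metric \<nu> X d \<longleftrightarrow>
     X \<noteq> {} \<and>
     (\<forall>x\<in>X. \<forall>y\<in>X. d x y \<ge> 0) \<and>
     (\<forall>x\<in>X. \<forall>y\<in>X. d x y = 0 \<longleftrightarrow> x = y) \<and>
     (\<forall>x\<in>X. \<forall>y\<in>X. d x y = d y x) \<and>
     (\<forall>us. length us = \<nu> + 2 \<and> distinct us \<and> set us \<subseteq> X \<longrightarrow>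
        d (hd us) (last us) \<le> (\<Sum>i<\<nu>+1. d (us ! i) (us ! Suc i)))"

text \<open>Cauchy: lim_n sup_{m>=0} d(x_n, x_{n+1+m}) = 0, written with bounded suprema
  (the supremum over m is eventually finite and tends to 0).\<close>
definition gm_cauchy :: "('a \<Rightarrow> 'a \<Rightarrow> real) \<Rightarrow> (nat \<Rightarrow> 'a) \<Rightarrow> bool" where
  "gm_cauchy d x \<longleftrightarrow>
     (\<forall>\<^sub>F n in sequentially. bdd_above (range (\<lambda>m. d (x n) (x (n + 1 + m))))) \<and>
     ((\<lambda>n. SUP m. d (x n) (x (n + 1 + m))) \<longlonglongrightarrow> 0)"

definition gm_converges :: "('a \<Rightarrow> 'a \<Rightarrow> real) \<Rightarrow> (nat \<Rightarrow> 'a) \<Rightarrow> 'a \<Rightarrow> bool" where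
  "gm_converges d x z \<longleftrightarrow> ((\<lambda>n. d z (x n)) \<longlonglongrightarrow> 0)"

definition gm_converges_strong :: "('a \<Rightarrow> 'a \<Rightarrow> real) \<Rightarrow> (nat \<Rightarrow> 'a) \<Rightarrow> 'a \<Rightarrow> bool" where
  "gm_converges_strong d x z \<longleftrightarrow> gm_cauchy d x \<and> gm_converges d x z"

definition gm_complete :: "'a set \<Rightarrow> ('a \<Rightarrow> 'a \<Rightarrow> real) \<Rightarrow> bool" where
  "gm_complete X d \<longleftrightarrow>
     (\<forall>x. range x \<subseteq> X \<and> gm_cauchy d x \<longrightarrow> (\<exists>z\<in>X. gm_converges d x z))"

definition ciric_matkowski :: "'a set \<Rightarrow> ('a \<Rightarrow> 'a \<Rightarrow> real) \<Rightarrow> ('a \<Rightarrow> 'a) \<Rightarrow> bool" where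
  "ciric_matkowski X d T \<longleftrightarrow>
     (\<forall>x\<in>X. \<forall>y\<in>X. x \<noteq> y \<longrightarrow> d (T x) (T y) < d x y) \<and>
     (\<forall>\<epsilon>>0. \<exists>\<delta>>0. \<forall>x\<in>X. \<forall>y\<in>X. d x y < \<delta> + \<epsilon> \<longrightarrow> d (T x) (T y) \<le> \<epsilon>)"

end

theory Submission
  imports Defs
begin

locale CM =
  fixes \<nu> :: nat and X :: "'a set" and d :: "'a \<Rightarrow> 'a \<Rightarrow> real" and T :: "'a \<Rightarrow> 'a"
  assumes nu: "\<nu> \<ge> 1" and gm: "nu_gen_metric \<nu> X d" and comp: "gm_complete X d"
    and TX: "T ` X \<subseteq> X" and cm: "ciric_matkowski X d T"
begin

lemma gm_p1: "\<forall>x\<in>X. \<forall>y\<in>X. d x y \<ge> 0"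
  using gm unfolding nu_gen_metric_def by (elim conjE) assumption
lemma gm_p2: "\<forall>x\<in>X. \<forall>y\<in>X. d x y = 0 \<longleftrightarrow> x = y"
  using gm unfolding nu_gen_metric_def by (elim conjE) assumption
lemma gm_p3: "\<forall>x\<in>X. \<forall>y\<in>X. d x y = d y x"
  using gm unfolding nu_gen_metric_def by (elim conjE) assumption
lemma gm_p4: "\<forall>us. length us = \<nu> + 2 \<and> distinct us \<and> set us \<subseteq> X \<longrightarrow>
        d (hd us) (last us) \<le> (\<Sum>i<\<nu>+1. d (us ! i) (us ! Suc i))"
  using gm unfolding nu_gen_metric_def by (elim conjE) assumption
lemmas gm_parts = gm_p1 gm_p2 gm_p3
lemma d_nonneg: assumes "x \<in> X" "y \<in> X" shows "d x y \<ge> 0"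
  using bspec[OF bspec[OF gm_p1 assms(1)] assms(2)] .
lemma d_zero: assumes "x \<in> X" "y \<in> X" shows "d x y = 0 \<longleftrightarrow> x = y"
  using bspec[OF bspec[OF gm_p2 assms(1)] assms(2)] .
lemma d_sym: assumes "x \<in> X" "y \<in> X" shows "d x y = d y x"
  using bspec[OF bspec[OF gm_p3 assms(1)] assms(2)] .
lemma d_self: "x \<in> X \<Longrightarrow> d x x = 0"
  using d_zero by blast

lemma poly:
  assumes "inj_on p {..Suc \<nu>}" "p ` {..Suc \<nu>} \<subseteq> X"
  shows "d (p 0) (p (Suc \<nu>)) \<le> (\<Sum>i<Suc \<nu>. d (p i) (p (Suc i)))"
proof -
  define us where "us = map p [0..<\<nu>+2]"
  have set: "set [0..<\<nu>+2] = {..Suc \<nu>}" by auto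
  have "length us = \<nu>+2" by (simp add: us_def)
  moreover have "distinct us" unfolding us_def distinct_map using assms(1) set by simp
  moreover have "set us \<subseteq> X" unfolding us_def set_map set using assms(2) by simp
  ultimately have "d (hd us) (last us) \<le> (\<Sum>i<\<nu>+1. d (us ! i) (us ! Suc i))"
    using gm_p4 by simp
  moreover have "hd us = p 0" by (simp add: us_def upt_conv_Cons del: upt_Suc)
  moreover have "last us = p (Suc \<nu>)" by (simp add: us_def last_map)
  moreover have "(\<Sum>i<\<nu>+1. d (us ! i) (us ! Suc i)) = (\<Sum>i<Suc \<nu>. d (p i) (p (Suc i)))"
  proof (rule sum.cong)
    fix i assume "i \<in> {..<Suc \<nu>}"
    then have i: "i < \<nu> + 2" "Suc i < \<nu> + 2" by auto
    have "us ! i = p i" unfolding us_def using i by (simp only: nth_map length_upt nth_upt) simp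
    moreover have "us ! Suc i = p (Suc i)" unfolding us_def using i by (simp only: nth_map length_upt nth_upt) simp
    ultimately show "d (us ! i) (us ! Suc i) = d (p i) (p (Suc i))" by simp
  qed simp
  ultimately show ?thesis by simp
qed

lemma contr: "x \<in> X \<Longrightarrow> y \<in> X \<Longrightarrow> x \<noteq> y \<Longrightarrow> d (T x) (T y) < d x y"
  using cm unfolding ciric_matkowski_def by blast
lemma TinX: "x \<in> X \<Longrightarrow> T x \<in> X" using TX by blast
lemma contr_le: assumes "x \<in> X" "y \<in> X" shows "d (T x) (T y) \<le> d x y"
proof (cases "x = y")
  case True
  then show ?thesis using d_self[OF TinX[OF assms(1)]] d_self[OF assms(1)] by simp
next
  case False
  then show ?thesis using contr[OF assms False] by simp
qed
lemma cm2: "\<epsilon> > 0 \<Longrightarrow> \<exists>\<delta>>0. \<forall>x\<in>X. \<forall>y\<in>X. d x y < \<delta> + \<epsilon> \<longrightarrow> d (T x) (T y) \<le> \<epsilon>"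
  using cm unfolding ciric_matkowski_def by blast

lemma orbX: "x \<in> X \<Longrightarrow> (T^^n) x \<in> X"
  by (induction n) (auto simp: TinX)

lemma fixed_unique: "z \<in> X \<Longrightarrow> w \<in> X \<Longrightarrow> T z = z \<Longrightarrow> T w = w \<Longrightarrow> z = w"
  using contr[of z w] by auto

lemma orb_inj:
  assumes x: "x \<in> X" and nf: "\<forall>n. T ((T^^n) x) \<noteq> (T^^n) x"
  shows "inj (\<lambda>n. (T^^n) x)"
proof -
  define a where "a n = d ((T^^n) x) ((T^^Suc n) x)" for n
  have dec: "a (Suc n) < a n" for n
  proof -
    have "(T^^n) x \<noteq> (T^^Suc n) x" using nf[rule_format, of n] by auto
    then show "a (Suc n) < a n"
      unfolding a_def using contr[of "(T^^n) x" "(T^^Suc n) x"] orbX[OF x, of "Suc n"] orbX[OF x, of n] by simp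
  qed
  have less: "m < n \<Longrightarrow> a n < a m" for m n
  proof (induction n)
    case (Suc n)
    show ?case
    proof (cases "m = n")
      case True then show ?thesis using dec[of n] by simp
    next
      case False then have "m < n" using Suc.prems by simp
      then have "a n < a m" by (rule Suc.IH)
      then show ?thesis using dec[of n] by linarith
    qed
  qed simp
  show ?thesis
  proof (rule linorder_injI)
    fix m n :: nat assume mn: "m < n"
    show "(T^^m) x \<noteq> (T^^n) x"
    proof
      assume eq: "(T^^m) x = (T^^n) x"
      have "a m = a n" unfolding a_def using eq by simp
      with less[OF mn] show False by simp
    qed
  qed
qed


lemma gap_to_zero:
  assumes x: "x \<in> X" and inj: "inj (\<lambda>n. (T^^n) x)" and j: "j \<ge> 1"
  shows "(\<lambda>n. d ((T^^n) x) ((T^^(n+j)) x)) \<longlonglongrightarrow> 0"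
proof -
  define b where "b n = d ((T^^n) x) ((T^^(n+j)) x)" for n
  have ne: "(T^^n) x \<noteq> (T^^(n+j)) x" for n
    using inj_eq[OF inj, of n "n+j"] j by simp
  have dec: "b (Suc n) < b n" for n
    unfolding b_def using contr[OF orbX[OF x] orbX[OF x] ne[of n]] by simp
  have "decseq b" using dec by (intro decseq_SucI) (simp add: less_imp_le)
  have pos: "\<forall>i. 0 \<le> b i" unfolding b_def using d_nonneg[OF orbX[OF x] orbX[OF x]] by simp
  obtain L where L: "b \<longlonglongrightarrow> L" "\<forall>i. L \<le> b i"
    using decseq_convergent[OF \<open>decseq b\<close> pos] by blast
  have L0: "L \<ge> 0" using LIMSEQ_le_const[OF L(1)] pos by blast
  have "L = 0"
  proof (rule ccontr)
    assume "L \<noteq> 0" then have Lp: "L > 0" using L0 by simp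
    obtain \<delta> where \<delta>: "\<delta>>0" "\<forall>a\<in>X. \<forall>c\<in>X. d a c < \<delta> + L \<longrightarrow> d (T a) (T c) \<le> L"
      using cm2[OF Lp] by blast
    have "eventually (\<lambda>n. b n < L + \<delta>) sequentially"
      using order_tendstoD(2)[OF L(1), of "L + \<delta>"] \<delta>(1) by simp
    then obtain N where N: "\<forall>n\<ge>N. b n < L + \<delta>" unfolding eventually_sequentially by blast
    have "d ((T^^N) x) ((T^^(N+j)) x) < \<delta> + L" using N unfolding b_def by auto
    then have "d (T ((T^^N) x)) (T ((T^^(N+j)) x)) \<le> L"
      using \<delta>(2) orbX[OF x] by blast
    then have "b (Suc N) \<le> L" unfolding b_def by simp
    moreover have "L \<le> b (Suc (Suc N))" using L(2) by blast
    ultimately show False using dec[of "Suc N"] by linarith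
  qed
  then show ?thesis using L(1) unfolding b_def by simp
qed

lemma cauchy_core:
  assumes x: "x \<in> X" and inj: "inj (\<lambda>n. (T^^n) x)" and ep: "\<epsilon> > 0"
  shows "\<exists>N. \<forall>n\<ge>N. \<forall>m>n. d ((T^^n) x) ((T^^m) x) < \<epsilon>"
proof -
  define e where "e = \<epsilon>/2"
  have e0: "e > 0" using ep by (simp add: e_def)
  obtain \<delta>0 where \<delta>0: "\<delta>0>0" "\<forall>a\<in>X. \<forall>b\<in>X. d a b < \<delta>0 + e \<longrightarrow> d (T a) (T b) \<le> e"
    using cm2[OF e0] by blast
  define \<delta> where "\<delta> = min \<delta>0 e"
  have \<delta>p: "\<delta> > 0" using \<delta>0(1) e0 by (simp add: \<delta>_def)
  have \<delta>le: "\<delta> \<le> e" "\<delta> \<le> \<delta>0" by (simp_all add: \<delta>_def)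
  have \<delta>cm: "d (T a) (T b) \<le> e" if "a \<in> X" "b \<in> X" "d a b < \<delta> + e" for a b
  proof -
    have "d a b < \<delta>0 + e" using that(3) \<delta>le by linarith
    then show ?thesis using \<delta>0(2) that(1,2) by blast
  qed
  define \<eta> where "\<eta> = \<delta> / (2 * real \<nu>)"
  have nup: "real \<nu> > 0" using nu by simp
  have \<eta>p: "\<eta> > 0" using \<delta>p nup by (simp add: \<eta>_def)
  have nu\<eta>: "real \<nu> * \<eta> = \<delta> / 2" using nup by (simp add: \<eta>_def)
  have ev1: "eventually (\<lambda>n. d ((T^^n) x) ((T^^(n+1)) x) < \<eta>) sequentially"
    using order_tendstoD(2)[OF gap_to_zero[OF x inj, of 1] \<eta>p] by simp
  have ev2: "eventually (\<lambda>n. \<forall>j\<in>{1..\<nu>}. d ((T^^n) x) ((T^^(n+j)) x) < \<delta>) sequentially"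
  proof (rule eventually_ball_finite)
    show "finite {1..\<nu>}" by simp
    show "\<forall>j\<in>{1..\<nu>}. eventually (\<lambda>n. d ((T^^n) x) ((T^^(n+j)) x) < \<delta>) sequentially"
    proof
      fix j assume "j \<in> {1..\<nu>}"
      then have "j \<ge> 1" by simp
      then show "eventually (\<lambda>n. d ((T^^n) x) ((T^^(n+j)) x) < \<delta>) sequentially"
        using order_tendstoD(2)[OF gap_to_zero[OF x inj] \<delta>p] by blast
    qed
  qed
  obtain N where N: "\<And>n. n \<ge> N \<Longrightarrow> d ((T^^n) x) ((T^^(n+1)) x) < \<eta>"
     "\<And>n j. n \<ge> N \<Longrightarrow> j \<in> {1..\<nu>} \<Longrightarrow> d ((T^^n) x) ((T^^(n+j)) x) < \<delta>"
    using eventually_conj[OF ev1 ev2] unfolding eventually_sequentially by blast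
  have main: "d ((T^^n) x) ((T^^m) x) < e + \<delta>" if nN: "n \<ge> N" and mn: "m > n" for n m
    using mn
  proof (induction m rule: less_induct)
    case (less m)
    show ?case
    proof (cases "m \<le> n + \<nu>")
      case True
      define j where "j = m - n"
      have j: "j \<in> {1..\<nu>}" "m = n + j" using True less.prems by (auto simp: j_def)
      have "d ((T^^n) x) ((T^^m) x) < \<delta>" using N(2)[OF nN j(1)] j(2) by simp
      then show ?thesis using e0 by linarith
    next
      case False
      define m' where "m' = m - \<nu>"
      have m': "m' < m" "m' > n" "m = m' + \<nu>" using False nu less.prems by (auto simp: m'_def)
      have IH: "d ((T^^n) x) ((T^^m') x) < e + \<delta>" using less.IH m' by blast
      have step0: "d (T ((T^^n) x)) (T ((T^^m') x)) \<le> e"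
        using \<delta>cm[OF orbX[OF x] orbX[OF x]] IH by (simp add: add.commute)
      have step: "d ((T^^Suc n) x) ((T^^Suc m') x) \<le> e" using step0 by simp
      define q where "q i = (if i = 0 then n else if i = 1 then Suc n else m' + i - 1)" for i :: nat
      define p where "p i = (T^^(q i)) x" for i
      have qinj: "inj_on q {..Suc \<nu>}"
        unfolding inj_on_def q_def using m'(2) by (auto split: if_splits)
      have pinj: "inj_on p {..Suc \<nu>}"
        unfolding p_def using inj_on_def inj_eq[OF inj] qinj by (smt (verit) inj_on_def)
      have pX: "p ` {..Suc \<nu>} \<subseteq> X" unfolding p_def using orbX[OF x] by auto
      have P: "d (p 0) (p (Suc \<nu>)) \<le> (\<Sum>i<Suc \<nu>. d (p i) (p (Suc i)))"
        by (rule poly[OF pinj pX])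
      have p0: "p 0 = (T^^n) x" by (simp add: p_def q_def)
      have pe: "p (Suc \<nu>) = (T^^m) x" using nu m'(3) by (simp add: p_def q_def)
      obtain k where k: "\<nu> = Suc k" using nu by (cases \<nu>) auto
      have split: "(\<Sum>i<Suc \<nu>. d (p i) (p (Suc i))) =
          d (p 0) (p 1) + (d (p 1) (p 2) + (\<Sum>i<k. d (p (Suc (Suc i))) (p (Suc (Suc (Suc i))))))"
        unfolding k by (simp only: sum.lessThan_Suc_shift) (simp add: numeral_2_eq_2)
      have f0: "d (p 0) (p 1) < \<eta>" using N(1)[OF nN] by (simp add: p_def q_def)
      have f1: "d (p 1) (p 2) \<le> e" using step by (simp add: p_def q_def numeral_2_eq_2)
      have fi: "d (p (Suc (Suc i))) (p (Suc (Suc (Suc i))))  \<le> \<eta>" for i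
      proof -
        have "m' + Suc i \<ge> N" using nN m'(2) by simp
        from N(1)[OF this] have "d ((T^^(m' + Suc i)) x) ((T^^(m' + Suc i + 1)) x) < \<eta>" .
        then show ?thesis by (simp add: p_def q_def)
      qed
      have "(\<Sum>i<k. d (p (Suc (Suc i))) (p (Suc (Suc (Suc i))))) \<le> of_nat (card {..<k}) * \<eta>"
        by (rule sum_bounded_above) (rule fi)
      then have S: "(\<Sum>i<k. d (p (Suc (Suc i))) (p (Suc (Suc (Suc i))))) \<le> real k * \<eta>" by simp
      have "real \<nu> * \<eta> = real k * \<eta> + \<eta>" unfolding k by (simp add: algebra_simps)
      then have "d (p 0) (p (Suc \<nu>)) < e + \<delta> / 2"
        using P split f0 f1 S nu\<eta> by linarith
      then show ?thesis using p0 pe \<delta>p by simp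
    qed
  qed
  show ?thesis
  proof (intro exI allI impI)
    fix n m assume "N \<le> n" "n < m"
    then have "d ((T^^n) x) ((T^^m) x) < e + \<delta>" by (rule main)
    then show "d ((T^^n) x) ((T^^m) x) < \<epsilon>" using \<delta>le e_def by linarith
  qed
qed


lemma orb_cauchy:
  assumes x: "x \<in> X" and inj: "inj (\<lambda>n. (T^^n) x)"
  shows "gm_cauchy d (\<lambda>n. (T^^n) x)"
  unfolding gm_cauchy_def
proof
  obtain N where N: "\<forall>n\<ge>N. \<forall>m>n. d ((T^^n) x) ((T^^m) x) < 1"
    using cauchy_core[OF x inj, of 1] by auto
  show "\<forall>\<^sub>F n in sequentially. bdd_above (range (\<lambda>m. d ((T^^n) x) ((T^^(n + 1 + m)) x)))"
    unfolding eventually_sequentially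
  proof (intro exI allI impI)
    fix n assume "N \<le> n"
    then have "d ((T^^n) x) ((T^^(n + 1 + m)) x) \<le> 1" for m
    proof -
      have h: "n < n + 1 + m" by simp
      assume "N \<le> n"
      from N[rule_format, OF this h] show ?thesis by (rule less_imp_le)
    qed
    then show "bdd_above (range (\<lambda>m. d ((T^^n) x) ((T^^(n + 1 + m)) x)))"
      by (intro bdd_aboveI2) 
  qed
  show "(\<lambda>n. SUP m. d ((T^^n) x) ((T^^(n + 1 + m)) x)) \<longlonglongrightarrow> 0"
  proof (rule LIMSEQ_I)
    fix r :: real assume r: "0 < r"
    obtain N where N: "\<forall>n\<ge>N. \<forall>m>n. d ((T^^n) x) ((T^^m) x) < r/2"
      using cauchy_core[OF x inj, of "r/2"] r by auto
    show "\<exists>no. \<forall>n\<ge>no. norm ((SUP m. d ((T^^n) x) ((T^^(n + 1 + m)) x)) - 0) < r"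
    proof (intro exI allI impI)
      fix n assume nN: "N \<le> n"
      have le: "d ((T^^n) x) ((T^^(n + 1 + m)) x) \<le> r/2" for m
      proof -
        have h: "n < n + 1 + m" by simp
        from N[rule_format, OF nN h] show ?thesis by (rule less_imp_le)
      qed
      have bdd: "bdd_above (range (\<lambda>m. d ((T^^n) x) ((T^^(n + 1 + m)) x)))"
        using le by (intro bdd_aboveI2)
      have up: "(SUP m. d ((T^^n) x) ((T^^(n + 1 + m)) x)) \<le> r/2"
        using le by (intro cSUP_least) auto
      have lo: "0 \<le> (SUP m. d ((T^^n) x) ((T^^(n + 1 + m)) x))"
        using cSUP_upper2[OF bdd UNIV_I d_nonneg[OF orbX[OF x] orbX[OF x]]] .
      show "norm ((SUP m. d ((T^^n) x) ((T^^(n + 1 + m)) x)) - 0) < r"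
        using up lo r by simp
    qed
  qed
qed

lemma eventually_avoid:
  assumes inj: "inj (\<lambda>n. (T^^n) x)"
  shows "\<exists>N. \<forall>m\<ge>N. (T^^m) x \<noteq> c"
proof (cases "\<exists>k. (T^^k) x = c")
  case True
  then obtain k where k: "(T^^k) x = c" by blast
  show ?thesis
  proof (intro exI allI impI)
    fix m assume "Suc k \<le> m"
    then show "(T^^m) x \<noteq> c" using k inj_eq[OF inj, of m k] by auto
  qed
qed auto

lemma lim_unique:
  assumes x: "x \<in> X" and inj: "inj (\<lambda>n. (T^^n) x)" and z: "z \<in> X" and w: "w \<in> X"
    and hz: "(\<lambda>n. d z ((T^^n) x)) \<longlonglongrightarrow> 0" and hw: "(\<lambda>n. d w ((T^^n) x)) \<longlonglongrightarrow> 0"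
  shows "z = w"
proof (rule ccontr)
  assume zw: "z \<noteq> w"
  obtain Nz where Nz: "\<forall>m\<ge>Nz. (T^^m) x \<noteq> z" using eventually_avoid[OF inj] by blast
  obtain Nw where Nw: "\<forall>m\<ge>Nw. (T^^m) x \<noteq> w" using eventually_avoid[OF inj] by blast
  define P where "P n i = (if i = 0 then z else if i = Suc \<nu> then w else (T^^(n+i-1)) x)" for n i
  define g where "g n = (\<Sum>i<Suc \<nu>. d (P n i) (P n (Suc i)))" for n
  have terms: "(\<lambda>n. d (P n i) (P n (Suc i))) \<longlonglongrightarrow> 0" if i: "i < Suc \<nu>" for i
  proof -
    consider "i = 0" | "i = \<nu>" "i \<ge> 1" | "i \<ge> 1" "i < \<nu>" using i nu by linarith
    then show ?thesis
    proof cases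
      case 1
      then have "(\<lambda>n. d (P n i) (P n (Suc i))) = (\<lambda>n. d z ((T^^n) x))"
        using nu by (auto simp: P_def)
      then show ?thesis using hz by simp
    next
      case 2
      have "(\<lambda>n. d (P n i) (P n (Suc i))) = (\<lambda>n. d w ((T^^(n + (\<nu> - 1))) x))"
      proof
        fix n
        have "d (P n i) (P n (Suc i)) = d ((T^^(n + (\<nu> - 1))) x) w"
          using 2 by (simp add: P_def)
        also have "\<dots> = d w ((T^^(n + (\<nu> - 1))) x)" using d_sym[OF orbX[OF x] w] .
        finally show "d (P n i) (P n (Suc i)) = d w ((T^^(n + (\<nu> - 1))) x)" .
      qed
      then show ?thesis using LIMSEQ_ignore_initial_segment[OF hw, of "\<nu> - 1"] by simp
    next
      case 3
      have "(\<lambda>n. d (P n i) (P n (Suc i))) = (\<lambda>n. d ((T^^(n + (i - 1))) x) ((T^^(n + (i - 1) + 1)) x))"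
        using 3 by (auto simp: P_def)
      then show ?thesis
        using LIMSEQ_ignore_initial_segment[OF gap_to_zero[OF x inj, of 1], of "i - 1"] by simp
    qed
  qed
  have g0: "g \<longlonglongrightarrow> 0"
  proof -
    have "(\<lambda>n. \<Sum>i<Suc \<nu>. d (P n i) (P n (Suc i))) \<longlonglongrightarrow> (\<Sum>i<Suc \<nu>. 0)"
      by (rule tendsto_sum) (use terms in auto)
    then show ?thesis unfolding g_def by simp
  qed
  have le: "d z w \<le> g n" if nN: "n \<ge> max Nz Nw" for n
  proof -
    have nz: "(T^^m) x \<noteq> z" "(T^^m) x \<noteq> w" if "m \<ge> n" for m using Nz Nw nN that by auto
    have pinj: "inj_on (P n) {..Suc \<nu>}"
    proof (rule inj_onI)
      fix a b assume a: "a \<in> {..Suc \<nu>}" and b: "b \<in> {..Suc \<nu>}" and eq: "P n a = P n b"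
      show "a = b"
      proof (rule ccontr)
        assume ab: "a \<noteq> b"
        have mid: "P n i = (T^^(n+i-1)) x" "n + i - 1 \<ge> n" if "i \<noteq> 0" "i \<noteq> Suc \<nu>" for i
          using that by (auto simp: P_def)
        show False
        proof (cases "a = 0 \<or> a = Suc \<nu>")
          case True
          then show ?thesis
          proof
            assume a0: "a = 0"
            show False
            proof (cases "b = Suc \<nu>")
              case True then show ?thesis using eq a0 zw by (simp add: P_def)
            next
              case False then show ?thesis using eq a0 ab mid[of b] nz[of "n+b-1"] by (simp add: P_def)
            qed
          next
            assume a0: "a = Suc \<nu>"
            show False
            proof (cases "b = 0")
              case True then show ?thesis using eq a0 zw by (simp add: P_def)
            next
              case False then show ?thesis using eq a0 ab mid[of b] nz[of "n+b-1"] by (simp add: P_def)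
            qed
          qed
        next
          case False
          show ?thesis
          proof (cases "b = 0 \<or> b = Suc \<nu>")
            case True
            then show ?thesis using eq False mid[of a] nz[of "n+a-1"] by (auto simp: P_def)
          next
            case bF: False
            have "(T^^(n+a-1)) x = (T^^(n+b-1)) x" using eq mid[of a] mid[of b] False bF by simp
            then have "n+a-1 = n+b-1" using inj_eq[OF inj] by simp
            then show ?thesis using ab False bF by arith
          qed
        qed
      qed
    qed
    have pX: "P n ` {..Suc \<nu>} \<subseteq> X" using z w orbX[OF x] by (auto simp: P_def)
    have "d (P n 0) (P n (Suc \<nu>)) \<le> g n" unfolding g_def by (rule poly[OF pinj pX])
    then show ?thesis by (simp add: P_def)
  qed
  have "d z w \<le> 0" using LIMSEQ_le_const[OF g0] le by blast
  then have "d z w = 0" using d_nonneg[OF z w] by simp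
  then show False using d_zero[OF z w] zw by simp
qed


lemma orbit_fix:
  assumes x: "x \<in> X"
  shows "\<exists>z\<in>X. T z = z \<and> gm_converges_strong d (\<lambda>n. (T^^n) x) z"
proof (cases "\<exists>n. T ((T^^n) x) = (T^^n) x")
  case True
  then obtain n where n: "T ((T^^n) x) = (T^^n) x" by blast
  define z where "z = (T^^n) x"
  have zX: "z \<in> X" using orbX[OF x] by (simp add: z_def)
  have c: "(T^^(n+k)) x = z" for k
    by (induction k) (simp_all add: z_def n)
  have cm: "(T^^m) x = z" if "m \<ge> n" for m
    using c[of "m - n"] that by simp
  have zz: "d z z = 0" using d_self[OF zX] .
  have Tz: "T z = z" using n by (simp add: z_def)
  have ev: "\<forall>\<^sub>F k in sequentially. \<forall>m. d ((T^^k) x) ((T^^(k + 1 + m)) x) = 0"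
    unfolding eventually_sequentially using cm zz Tz by (intro exI[of _ n]) auto
  have cau: "gm_cauchy d (\<lambda>n. (T^^n) x)"
    unfolding gm_cauchy_def
  proof
    show "\<forall>\<^sub>F k in sequentially. bdd_above (range (\<lambda>m. d ((T^^k) x) ((T^^(k + 1 + m)) x)))"
      using ev by eventually_elim (simp add: bdd_aboveI2)
    have "\<forall>\<^sub>F k in sequentially. (SUP m. d ((T^^k) x) ((T^^(k + 1 + m)) x)) = 0"
      using ev by eventually_elim simp
    then show "(\<lambda>k. SUP m. d ((T^^k) x) ((T^^(k + 1 + m)) x)) \<longlonglongrightarrow> 0"
      by (rule tendsto_eventually)
  qed
  have "\<forall>\<^sub>F k in sequentially. d z ((T^^k) x) = 0"
    unfolding eventually_sequentially using cm zz by (intro exI[of _ n]) auto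
  then have conv: "gm_converges d (\<lambda>n. (T^^n) x) z"
    unfolding gm_converges_def by (rule tendsto_eventually)
  show ?thesis using zX n cau conv unfolding gm_converges_strong_def z_def by auto
next
  case False
  then have nf: "\<forall>n. T ((T^^n) x) \<noteq> (T^^n) x" by blast
  have inj: "inj (\<lambda>n. (T^^n) x)" by (rule orb_inj[OF x nf])
  have cau: "gm_cauchy d (\<lambda>n. (T^^n) x)" by (rule orb_cauchy[OF x inj])
  have rng: "range (\<lambda>n. (T^^n) x) \<subseteq> X" using orbX[OF x] by auto
  obtain z where zX: "z \<in> X" and conv: "gm_converges d (\<lambda>n. (T^^n) x) z"
    using comp rng cau unfolding gm_complete_def by blast
  have hz: "(\<lambda>n. d z ((T^^n) x)) \<longlonglongrightarrow> 0" using conv unfolding gm_converges_def .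
  have TzX: "T z \<in> X" by (rule TinX[OF zX])
  have hTs: "(\<lambda>n. d (T z) ((T^^(Suc n)) x)) \<longlonglongrightarrow> 0"
  proof (rule tendsto_sandwich[OF _ _ tendsto_const hz])
    show "\<forall>\<^sub>F n in sequentially. 0 \<le> d (T z) ((T^^(Suc n)) x)"
      using d_nonneg[OF TzX orbX[OF x, of "Suc n" for n]] by (intro always_eventually allI) 
    show "\<forall>\<^sub>F n in sequentially. d (T z) ((T^^(Suc n)) x) \<le> d z ((T^^n) x)"
      using contr_le[OF zX orbX[OF x]] by simp
  qed
  have hT: "(\<lambda>n. d (T z) ((T^^n) x)) \<longlonglongrightarrow> 0"
    using LIMSEQ_imp_Suc[of "\<lambda>n. d (T z) ((T^^n) x)"] hTs by blast
  have "z = T z" by (rule lim_unique[OF x inj zX TzX hz hT])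
  then have "T z = z" by (rule sym)
  then show ?thesis using zX cau conv unfolding gm_converges_strong_def by (intro bexI[of _ z]) auto
qed

end

theorem corollary3p4:
  fixes \<nu> :: nat and X :: "'a set" and d :: "'a \<Rightarrow> 'a \<Rightarrow> real" and T :: "'a \<Rightarrow> 'a"
  assumes "\<nu> \<ge> 1"
    and "nu_gen_metric \<nu> X d"
    and "gm_complete X d"
    and "T ` X \<subseteq> X"
    and "ciric_matkowski X d T"
  shows "\<exists>z\<in>X. T z = z \<and> (\<forall>w\<in>X. T w = w \<longrightarrow> w = z) \<and>
           (\<forall>x\<in>X. gm_converges_strong d (\<lambda>n. (T ^^ n) x) z)"
proof -
  interpret CM \<nu> X d T using assms by unfold_locales
  have "X \<noteq> {}" using assms(2) unfolding nu_gen_metric_def by (elim conjE) assumption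
  then obtain x0 where x0: "x0 \<in> X" by blast
  obtain z where z: "z \<in> X" "T z = z" using orbit_fix[OF x0] by blast
  show ?thesis
  proof (intro bexI conjI ballI impI)
    show "z \<in> X" "T z = z" by (rule z(1), rule z(2))
    fix w assume "w \<in> X" "T w = w"
    then show "w = z" using fixed_unique z by blast
  next
    fix x assume x: "x \<in> X"
    obtain z' where z': "z' \<in> X" "T z' = z'" "gm_converges_strong d (\<lambda>n. (T^^n) x) z'"
      using orbit_fix[OF x] by blast
    have "z' = z" using fixed_unique z z' by blast
    then show "gm_converges_strong d (\<lambda>n. (T^^n) x) z" using z'(3) by simp
  qed
qed

end
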